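(* Consider the binary random graph affiliation mixture model with $Q\ge1$ groups, all $\pi_q>0$, and $\alpha\ne\beta$. Let $m_1=\mathbb E(X_{12})$, $m_2=\mathbb E(X_{12}X_{13})$, $m_3=\mathbb E(X_{12}X_{13}X_{23})$. Then $$2m_1^3-3m_1m_2+m_3=0\quad\text{if and only if}\quad Q=1.$$
   Context: Random graph mixture model: nodes have i.i.d. latent groups $Z_i\in\{1,\dots,Q\}$ with $\pi_q=\mathbb P(Z_i=q)$, $\sum_q\pi_q=1$; edge variables $X_{ij}$ ($i<j$) are conditionally independent given all $Z$'s, with law of $X_{ij}$ depending only on $(Z_i,Z_j)$. Binary affiliation model: $X_{ij}\in\{0,1\}$ with $\mathbb P(X_{ij}=1\mid Z_i=q,Z_j=l)=\alpha$ if $q=l$ and $=\beta$ if $q\ne l$ (when $Q=1$ only $\alpha$ is used). *)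

theory Defs
  imports "HOL-Probability.Probability"
begin

definition aff_conn :: "real \<Rightarrow> real \<Rightarrow> nat \<Rightarrow> nat \<Rightarrow> real" where
  "aff_conn \<alpha> \<beta> q l = (if q = l then \<alpha> else \<beta>)"

definition aff_triple :: "nat pmf \<Rightarrow> real \<Rightarrow> real \<Rightarrow> (bool \<times> bool \<times> bool) pmf" where
  "aff_triple \<pi> \<alpha> \<beta> =
     do { z1 \<leftarrow> \<pi>; z2 \<leftarrow> \<pi>; z3 \<leftarrow> \<pi>;
          x12 \<leftarrow> bernoulli_pmf (aff_conn \<alpha> \<beta> z1 z2);
          x13 \<leftarrow> bernoulli_pmf (aff_conn \<alpha> \<beta> z1 z3);
          x23 \<leftarrow> bernoulli_pmf (aff_conn \<alpha> \<beta> z2 z3);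
          return_pmf (x12, x13, x23) }"

definition aff_m1 :: "nat pmf \<Rightarrow> real \<Rightarrow> real \<Rightarrow> real" where
  "aff_m1 \<pi> \<alpha> \<beta> = measure_pmf.expectation (aff_triple \<pi> \<alpha> \<beta>)
     (\<lambda>(x12, x13, x23). of_bool x12)"

definition aff_m2 :: "nat pmf \<Rightarrow> real \<Rightarrow> real \<Rightarrow> real" where
  "aff_m2 \<pi> \<alpha> \<beta> = measure_pmf.expectation (aff_triple \<pi> \<alpha> \<beta>)
     (\<lambda>(x12, x13, x23). of_bool x12 * of_bool x13)"

definition aff_m3 :: "nat pmf \<Rightarrow> real \<Rightarrow> real \<Rightarrow> real" where
  "aff_m3 \<pi> \<alpha> \<beta> = measure_pmf.expectation (aff_triple \<pi> \<alpha> \<beta>)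
     (\<lambda>(x12, x13, x23). of_bool x12 * of_bool x13 * of_bool x23)"

end

theory Submission imports Defs begin

lemma int_bind_pmf_fin:
  fixes f :: "'b::finite \<Rightarrow> real"
  shows "measure_pmf.expectation (bind_pmf M N) f = measure_pmf.expectation M (\<lambda>x. measure_pmf.expectation (N x) f)"
  unfolding measure_pmf_bind
  by (rule integral_bind[where K="count_space UNIV" and B="\<Sum>y\<in>UNIV. \<bar>f y\<bar>" and B'=1])
     (auto intro: member_le_sum measure_pmf.finite_measure simp: measure_pmf_in_subprob_algebra)

lemma sum_if_pt:
  fixes A B :: "nat \<Rightarrow> real"
  assumes "finite S" "z \<in> S"
  shows "(\<Sum>q\<in>S. if q = z then A q else B q) = (\<Sum>q\<in>S. B q) + A z - B z"
proof -
  have "(\<Sum>q\<in>S. if q = z then A q else B q) = (\<Sum>q\<in>S. B q + (if q = z then A q - B q else 0))"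
    by (rule sum.cong) auto
  also have "\<dots> = (\<Sum>q\<in>S. B q) + (A z - B z)"
    using assms by (simp add: sum.distrib)
  finally show ?thesis by simp
qed

lemma moments:
  fixes \<pi> :: "nat pmf" and Q :: nat and \<alpha> \<beta> :: real
  assumes S: "set_pmf \<pi> = {1..Q}"
    and "0 \<le> \<alpha>" "\<alpha> \<le> 1" "0 \<le> \<beta>" "\<beta> \<le> 1"
  defines "s2 \<equiv> (\<Sum>a\<in>{1..Q}. pmf \<pi> a ^ 2)" and "s3 \<equiv> (\<Sum>a\<in>{1..Q}. pmf \<pi> a ^ 3)"
    and "d \<equiv> \<alpha> - \<beta>"
  shows "aff_m1 \<pi> \<alpha> \<beta> = \<beta> + d * s2"
    and "aff_m2 \<pi> \<alpha> \<beta> = \<beta>^2 + 2*\<beta>*d* s2 + d^2* s3"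
    and "aff_m3 \<pi> \<alpha> \<beta> = \<beta>^3 + 3*\<beta>^2*d* s2 + (3*\<beta>*d^2 + d^3)* s3"
proof -
  define p where "p = pmf \<pi>"
  define c where "c = aff_conn \<alpha> \<beta>"
  let ?S = "{1..Q}"
  have [simp]: "0 \<le> aff_conn \<alpha> \<beta> q l" "aff_conn \<alpha> \<beta> q l \<le> 1" for q l
    using assms by (auto simp: aff_conn_def)
  have I: "measure_pmf.expectation \<pi> g = (\<Sum>a\<in>{1..Q}. g a * pmf \<pi> a)" for g :: "nat \<Rightarrow> real"
    by (rule integral_measure_pmf_real) (use assms in auto)
  have P1: "(\<Sum>a\<in>?S. p a) = 1"
    unfolding p_def using sum_pmf_eq_1[of ?S \<pi>] S by auto
  have P1s: "sum p {Suc 0..Q} = 1" using P1 by simp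
  have P1': "(\<Sum>a\<in>?S. f * p a) = f" for f
    using P1 by (simp add: sum_distrib_left[symmetric])
  have s2p: "s2 = (\<Sum>a\<in>?S. p a * p a)" unfolding s2_def p_def by (simp add: power2_eq_square)
  have s3p: "s3 = (\<Sum>a\<in>?S. p a * p a * p a)" unfolding s3_def p_def by (simp add: power3_eq_cube)
  have L1: "(\<Sum>q\<in>?S. c z q * p q) = \<beta> + d * p z" if "z \<in> ?S" for z
  proof -
    have "(\<Sum>q\<in>?S. c z q * p q) = (\<Sum>q\<in>?S. if q = z then \<alpha> * p q else \<beta> * p q)"
      by (rule sum.cong) (auto simp: c_def aff_conn_def)
    also have "\<dots> = \<beta> + d * p z" using that P1' by (simp add: sum_if_pt d_def algebra_simps)
    finally show ?thesis .
  qed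
  show "aff_m1 \<pi> \<alpha> \<beta> = \<beta> + d * s2"
  proof -
    have "aff_m1 \<pi> \<alpha> \<beta> = (\<Sum>a\<in>?S. (\<Sum>aa\<in>?S. c a aa * p aa) * p a)"
      unfolding aff_m1_def aff_triple_def by (simp add: int_bind_pmf_fin I c_def p_def)
    also have "\<dots> = (\<Sum>a\<in>?S. (\<beta> + d * p a) * p a)"
      using P1 L1 by (simp add: sum_distrib_left[symmetric])
    also have "\<dots> = \<beta> + d * s2"
      using P1' by (simp add: s2_def p_def algebra_simps sum.distrib sum_distrib_left[symmetric] power2_eq_square)
    finally show ?thesis .
  qed
  show "aff_m2 \<pi> \<alpha> \<beta> = \<beta>^2 + 2*\<beta>*d* s2 + d^2* s3"
  proof -
    have "aff_m2 \<pi> \<alpha> \<beta> = (\<Sum>a\<in>?S. (\<Sum>aa\<in>?S. c a aa * p aa) * (\<Sum>aa\<in>?S. c a aa * p aa) * p a)"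
      unfolding aff_m2_def aff_triple_def by (simp add: int_bind_pmf_fin I c_def p_def)
    also have "\<dots> = (\<Sum>a\<in>?S. (\<beta> + d * p a)^2 * p a)"
      using L1 by (intro sum.cong refl) (simp add: power2_eq_square)
    also have "\<dots> = \<beta>^2 + 2*\<beta>*d* s2 + d^2* s3"
      using P1' by (simp add: s2_def s3_def p_def algebra_simps sum.distrib sum_distrib_left[symmetric] power2_eq_square power3_eq_cube)
    finally show ?thesis .
  qed
  show "aff_m3 \<pi> \<alpha> \<beta> = \<beta>^3 + 3*\<beta>^2*d* s2 + (3*\<beta>*d^2 + d^3)* s3"
  proof -
    have "aff_m3 \<pi> \<alpha> \<beta> = (\<Sum>a\<in>?S. (\<Sum>aa\<in>?S. (\<Sum>ab\<in>?S. c a aa * c a ab * c aa ab * p ab) * p aa) * p a)"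
      unfolding aff_m3_def aff_triple_def by (simp add: int_bind_pmf_fin I c_def p_def)
    also have "\<dots> = (\<Sum>a\<in>?S. (\<beta>^3 + \<beta>^2*d * p a + \<beta>^2*d* s2 + (\<alpha>*(\<beta>^2+(\<alpha>^2-\<beta>^2)*p a) - \<beta>*(\<beta>^2+2*\<beta>*d*p a)) * p a) * p a)"
    proof (rule sum.cong[OF refl])
      fix a assume a: "a \<in> ?S"
      define K where "K aa = \<beta>^2 + \<beta>*d*(p a + p aa) + (if aa = a then d^2 * p a else 0)" for aa
      have K: "(\<Sum>ab\<in>?S. c a ab * c aa ab * p ab) = K aa" if aa: "aa \<in> ?S" for aa
      proof (cases "aa = a")
        case True
        have "(\<Sum>ab\<in>?S. c a ab * c aa ab * p ab) = (\<Sum>ab\<in>?S. if ab = a then \<alpha>^2 * p ab else \<beta>^2 * p ab)"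
          by (rule sum.cong) (auto simp: c_def aff_conn_def True power2_eq_square)
        also have "\<dots> = K aa" using a P1' True by (simp add: sum_if_pt K_def d_def algebra_simps power2_eq_square P1 sum_distrib_left[symmetric])
        finally show ?thesis .
      next
        case False
        have "(\<Sum>ab\<in>?S. c a ab * c aa ab * p ab) = (\<Sum>ab\<in>?S. if ab = a then \<alpha>*\<beta> * p ab else (if ab = aa then \<alpha>*\<beta> * p ab else \<beta>^2 * p ab))"
          by (rule sum.cong) (use False in \<open>auto simp: c_def aff_conn_def power2_eq_square\<close>)
        also have "\<dots> = K aa" using a aa P1' False by (simp add: sum_if_pt K_def d_def algebra_simps power2_eq_square P1 sum_distrib_left[symmetric])
        finally show ?thesis .
      qed
      have "(\<Sum>aa\<in>?S. (\<Sum>ab\<in>?S. c a aa * c a ab * c aa ab * p ab) * p aa) = (\<Sum>aa\<in>?S. c a aa * K aa * p aa)"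
      proof (rule sum.cong[OF refl])
        fix aa assume aa: "aa \<in> ?S"
        have "(\<Sum>ab\<in>?S. c a aa * c a ab * c aa ab * p ab) = c a aa * (\<Sum>ab\<in>?S. c a ab * c aa ab * p ab)"
          by (simp add: sum_distrib_left mult_ac)
        then show "(\<Sum>ab\<in>?S. c a aa * c a ab * c aa ab * p ab) * p aa = c a aa * K aa * p aa"
          using K[OF aa] by simp
      qed
      also have "\<dots> = (\<Sum>aa\<in>?S. if aa = a then \<alpha> * (\<beta>^2+(\<alpha>^2-\<beta>^2)*p a) * p aa else \<beta>*(\<beta>^2 + \<beta>*d*(p a + p aa)) * p aa)"
        by (rule sum.cong[OF refl]) (auto simp: c_def aff_conn_def K_def d_def algebra_simps power2_eq_square)
      also have "\<dots> = \<beta>^3 + \<beta>^2*d * p a + \<beta>^2*d* s2 + (\<alpha>*(\<beta>^2+(\<alpha>^2-\<beta>^2)*p a) - \<beta>*(\<beta>^2+2*\<beta>*d*p a)) * p a"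
        using a by (simp add: sum_if_pt s2p algebra_simps sum.distrib sum_distrib_left[symmetric] sum_distrib_right[symmetric] P1 P1s power2_eq_square power3_eq_cube)
      finally show "(\<Sum>aa\<in>?S. (\<Sum>ab\<in>?S. c a aa * c a ab * c aa ab * p ab) * p aa) * p a = (\<beta>^3 + \<beta>^2*d * p a + \<beta>^2*d* s2 + (\<alpha>*(\<beta>^2+(\<alpha>^2-\<beta>^2)*p a) - \<beta>*(\<beta>^2+2*\<beta>*d*p a)) * p a) * p a" by simp
    qed
    also have "\<dots> = \<beta>^3 + 3*\<beta>^2*d* s2 + (3*\<beta>*d^2 + d^3)* s3"
    proof -
      define X0 where "X0 = \<beta>^3 + \<beta>^2*d* s2"
      define X1 where "X1 = \<beta>^2*d + \<alpha>*\<beta>^2 - \<beta>^3"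
      define X2 where "X2 = \<alpha>*(\<alpha>^2-\<beta>^2) - 2*\<beta>^2*d"
      have "(\<Sum>a\<in>?S. (\<beta>^3 + \<beta>^2*d * p a + \<beta>^2*d* s2 + (\<alpha>*(\<beta>^2+(\<alpha>^2-\<beta>^2)*p a) - \<beta>*(\<beta>^2+2*\<beta>*d*p a)) * p a) * p a)
          = (\<Sum>a\<in>?S. X0 * p a + X1 * (p a * p a) + X2 * (p a * p a * p a))"
        by (rule sum.cong[OF refl]) (simp add: X0_def X1_def X2_def d_def algebra_simps power2_eq_square power3_eq_cube)
      also have "\<dots> = X0 + X1 * s2 + X2 * s3"
        by (simp add: sum.distrib sum_distrib_left[symmetric] P1 P1s s2p s3p)
      also have "\<dots> = \<beta>^3 + 3*\<beta>^2*d* s2 + (3*\<beta>*d^2 + d^3)* s3"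
        by (simp add: X0_def X1_def X2_def d_def algebra_simps power2_eq_square power3_eq_cube)
      finally show ?thesis .
    qed
    finally show ?thesis .
  qed
qed


lemma key_ineq:
  fixes s2 s3 t :: real
  assumes "0 < t" "t < 1" "s2 = t^2" "0 \<le> s3" "s3 \<le> t * s2"
  shows "2* s2^3 - 3* s2* s3 + s3 > 0"
proof (cases "3* s2 \<le> 1")
  case True
  have "s3 * (1 - 3* s2) \<ge> 0" using True assms by simp
  moreover have "s2^3 > 0" using assms by simp
  moreover have "2* s2^3 - 3* s2* s3 + s3 = 2* s2^3 + s3*(1-3* s2)" by (simp add: algebra_simps)
  ultimately show ?thesis by linarith
next
  case False
  have "s3 * (3* s2 - 1) \<le> t * s2 * (3* s2-1)" using False assms by (intro mult_right_mono) auto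
  moreover have "2* s2^3 - t* s2*(3* s2-1) = t^3 * ((t-1)^2*(2*t+1))"
    unfolding assms(3) by (simp add: algebra_simps power2_eq_square power3_eq_cube)
  moreover have "t^3 * ((t-1)^2*(2*t+1)) > 0" using assms by (intro mult_pos_pos) auto
  moreover have "2* s2^3 - 3* s2* s3 + s3 = 2* s2^3 - s3 * (3* s2 - 1)" by (simp add: algebra_simps)
  ultimately show ?thesis by linarith
qed

theorem proposition2:
  fixes \<pi> :: "nat pmf" and Q :: nat and \<alpha> \<beta> :: real
  assumes "Q \<ge> 1"
    and "set_pmf \<pi> = {1..Q}"
    and "0 \<le> \<alpha>" "\<alpha> \<le> 1" "0 \<le> \<beta>" "\<beta> \<le> 1"
    and "\<alpha> \<noteq> \<beta>"
  shows "2 * aff_m1 \<pi> \<alpha> \<beta> ^ 3 - 3 * aff_m1 \<pi> \<alpha> \<beta> * aff_m2 \<pi> \<alpha> \<beta>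
           + aff_m3 \<pi> \<alpha> \<beta> = 0 \<longleftrightarrow> Q = 1"
proof -
  define s2 where "s2 = (\<Sum>a\<in>{1..Q}. pmf \<pi> a ^ 2)"
  define s3 where "s3 = (\<Sum>a\<in>{1..Q}. pmf \<pi> a ^ 3)"
  define d where "d = \<alpha> - \<beta>"
  note M = moments[OF assms(2-6), folded s2_def s3_def d_def]
  have E: "2 * aff_m1 \<pi> \<alpha> \<beta> ^ 3 - 3 * aff_m1 \<pi> \<alpha> \<beta> * aff_m2 \<pi> \<alpha> \<beta> + aff_m3 \<pi> \<alpha> \<beta>
      = d^3 * (2* s2^3 - 3* s2* s3 + s3)"
    unfolding M by (simp add: algebra_simps power2_eq_square power3_eq_cube)
  have d0: "d^3 \<noteq> 0" using assms(7) by (simp add: d_def)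
  let ?S = "{1..Q}"
  have P1: "(\<Sum>a\<in>?S. pmf \<pi> a) = 1" using sum_pmf_eq_1[of ?S \<pi>] assms(2) by auto
  have pos: "pmf \<pi> a > 0" if "a \<in> ?S" for a using that assms(2) by (simp add: pmf_positive)
  show ?thesis
  proof (cases "Q = 1")
    case True
    have "pmf \<pi> 1 = 1" using P1 True by simp
    then have "s2 = 1" "s3 = 1" using True by (simp_all add: s2_def s3_def)
    then show ?thesis using E True by simp
  next
    case False
    then have Q2: "Q \<ge> 2" using assms(1) by simp
    have lt1: "pmf \<pi> a < 1" if a: "a \<in> ?S" for a
    proof -
      have "(if a = 1 then 2 else 1) \<in> ?S \<and> (if a = 1 then 2 else 1) \<noteq> a" using Q2 a by auto
      then obtain b where b: "b \<in> ?S" "b \<noteq> a" by blast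
      have "(\<Sum>x\<in>?S. pmf \<pi> x) \<ge> (\<Sum>x\<in>{a,b}. pmf \<pi> x)"
        using a b by (intro sum_mono2) auto
      then show ?thesis using P1 b pos[OF b(1)] by simp
    qed
    define t where "t = sqrt s2"
    have s2lt: "s2 < 1"
    proof -
      have "s2 < (\<Sum>a\<in>?S. pmf \<pi> a)" unfolding s2_def
        using assms(1) pos lt1 by (intro sum_strict_mono) (auto simp: power2_eq_square)
      then show ?thesis using P1 by simp
    qed
    have s2pos: "s2 > 0" unfolding s2_def using assms(1) pos
      by (intro sum_pos) (simp_all, metis atLeastAtMost_iff One_nat_def power2_less_0 not_less zero_less_power2 pos less_irrefl)
    have tt: "s2 = t^2" "0 < t" "t < 1" using s2lt s2pos by (auto simp: t_def)
    have pt: "pmf \<pi> a \<le> t" if "a \<in> ?S" for a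
    proof -
      have "pmf \<pi> a ^ 2 \<le> s2" unfolding s2_def using that by (intro member_le_sum) auto
      then show ?thesis unfolding t_def by (simp add: real_le_rsqrt)
    qed
    have "s3 \<le> (\<Sum>a\<in>?S. t * pmf \<pi> a ^ 2)" unfolding s3_def
    proof (rule sum_mono)
      fix a assume a: "a \<in> ?S"
      have "pmf \<pi> a * pmf \<pi> a^2 \<le> t * pmf \<pi> a^2" using pt[OF a] by (intro mult_right_mono) auto
      then show "pmf \<pi> a ^ 3 \<le> t * pmf \<pi> a ^ 2" by (simp add: power3_eq_cube power2_eq_square)
    qed
    then have s3le: "s3 \<le> t * s2" by (simp add: s2_def sum_distrib_left)
    have "s3 \<ge> 0" unfolding s3_def by (intro sum_nonneg) auto
    then have "2* s2^3 - 3* s2* s3 + s3 > 0" using key_ineq tt s3le by blast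
    then show ?thesis using E d0 False by simp
  qed
qed

end
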